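(* Let $(D,\theta)$ be a finite-dimensional division algebra with involution of the first kind over a field $F$, let $\lambda=\pm1$, and let $(V,h)$ be an even $\lambda$-hermitian space over $(D,\theta)$. Suppose that either $D\neq F$ or $\lambda\neq-1$. If $h$ is regular, then for every $F$-basis $\mathcal{B}$ of $\mathrm{Symd}_\lambda(D,\theta)$ the system of quadratic forms $q_{h,\mathcal{B}}$ is totally regular.
   Context: The field $F$ has arbitrary characteristic. An involution of the first kind on $D$ is an $F$-linear antiautomorphism of order $2$. $\mathrm{Symd}_\lambda(D,\theta)=\{x+\lambda\theta(x)\mid x\in D\}$. A $\lambda$-hermitian space $(V,h)$ consists of a finite-dimensional right $D$-vector space $V$ and a bi-additive map $h:V\times V\to D$ with $h(u\alpha,v\beta)=\theta(\alpha)h(u,v)\beta$ and $h(v,u)=\lambda\theta(h(u,v))$; $h$ is regular if no nonzero $v$ satisfies $h(v,w)=0$ for all $w\in V$, and even if $h(v,v)\in\mathrm{Symd}_\lambda(D,\theta)$ for all $v\in V$. For an $F$-basis $\mathcal{B}=\{u_1,\dots,u_n\}$ of $\mathrm{Symd}_\lambda(D,\theta)$ with dual basis $\pi_1,\dots,\pi_n$, $q_{h,\mathcal{B}}=(q^{u_1}_{h,\mathcal{B}},\dots,q^{u_n}_{h,\mathcal{B}}):V\to F^n$ with $q^{u_i}_{h,\mathcal{B}}(v)=\pi_i(h(v,v))$, where $V$ is viewed as an $F$-vector space; each component is a quadratic form over $F$. A quadratic form $q$ is regular if no nonzero $v$ satisfies $q(v+w)-q(v)-q(w)=0$ for all $w$;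 a system $(q_1,\dots,q_n)$ is totally regular if every $q_i$ is regular. *)

theory Defs
  imports Main
begin

text \<open>The base field F is modelled as a subfield Fs of the division ring D
  (type 'd) contained in the centre of D, i.e. D is an F-algebra.\<close>

definition central_subfield :: "'d::division_ring set \<Rightarrow> bool" where
  "central_subfield Fs \<longleftrightarrow>
     0 \<in> Fs \<and> 1 \<in> Fs \<and>
     (\<forall>a\<in>Fs. \<forall>b\<in>Fs. a + b \<in> Fs \<and> a * b \<in> Fs) \<and>
     (\<forall>a\<in>Fs. - a \<in> Fs \<and> inverse a \<in> Fs) \<and>
     (\<forall>a\<in>Fs. \<forall>x. a * x = x * a)"

definition findim_over :: "'d::division_ring set \<Rightarrow> bool" where
  "findim_over Fs \<longleftrightarrow>
     (\<exists>S. finite S \<and> (\<forall>x::'d. \<exists>c. (\<forall>s\<in>S. c s \<in> Fs) \<and> x = (\<Sum>s\<in>S. c s * s)))"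

definition involution_first_kind :: "'d::division_ring set \<Rightarrow> ('d \<Rightarrow> 'd) \<Rightarrow> bool" where
  "involution_first_kind Fs \<theta> \<longleftrightarrow>
     (\<forall>x y. \<theta> (x + y) = \<theta> x + \<theta> y) \<and>
     (\<forall>x y. \<theta> (x * y) = \<theta> y * \<theta> x) \<and>
     (\<forall>a\<in>Fs. \<forall>x. \<theta> (a * x) = a * \<theta> x) \<and>
     (\<forall>x. \<theta> (\<theta> x) = x)"

definition Symd :: "'d::division_ring \<Rightarrow> ('d \<Rightarrow> 'd) \<Rightarrow> 'd set" where
  "Symd lam \<theta> = {x + lam * \<theta> x | x. True}"

definition right_vector_space :: "('v::ab_group_add \<Rightarrow> 'd::division_ring \<Rightarrow> 'v) \<Rightarrow> bool" where
  "right_vector_space smul \<longleftrightarrow>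
     (\<forall>v w a. smul (v + w) a = smul v a + smul w a) \<and>
     (\<forall>v a b. smul v (a + b) = smul v a + smul v b) \<and>
     (\<forall>v a b. smul v (a * b) = smul (smul v a) b) \<and>
     (\<forall>v. smul v 1 = v)"

definition findim_right :: "('v::ab_group_add \<Rightarrow> 'd::division_ring \<Rightarrow> 'v) \<Rightarrow> bool" where
  "findim_right smul \<longleftrightarrow>
     (\<exists>S. finite S \<and> (\<forall>v::'v. \<exists>c. v = (\<Sum>s\<in>S. smul s (c s))))"

definition lambda_hermitian ::
  "('d::division_ring \<Rightarrow> 'd) \<Rightarrow> 'd \<Rightarrow> ('v::ab_group_add \<Rightarrow> 'd \<Rightarrow> 'v) \<Rightarrow> ('v \<Rightarrow> 'v \<Rightarrow> 'd) \<Rightarrow> bool" where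
  "lambda_hermitian \<theta> lam smul h \<longleftrightarrow>
     (\<forall>u u' v. h (u + u') v = h u v + h u' v) \<and>
     (\<forall>u v v'. h u (v + v') = h u v + h u v') \<and>
     (\<forall>u v \<alpha> \<beta>. h (smul u \<alpha>) (smul v \<beta>) = \<theta> \<alpha> * h u v * \<beta>) \<and>
     (\<forall>u v. h v u = lam * \<theta> (h u v))"

definition herm_regular :: "('v::zero \<Rightarrow> 'v \<Rightarrow> 'd::zero) \<Rightarrow> bool" where
  "herm_regular h \<longleftrightarrow> (\<forall>v. (\<forall>w. h v w = 0) \<longrightarrow> v = 0)"

definition herm_even :: "('d::division_ring \<Rightarrow> 'd) \<Rightarrow> 'd \<Rightarrow> ('v \<Rightarrow> 'v \<Rightarrow> 'd) \<Rightarrow> bool" where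
  "herm_even \<theta> lam h \<longleftrightarrow> (\<forall>v. h v v \<in> Symd lam \<theta>)"

definition is_F_basis :: "'d::division_ring set \<Rightarrow> 'd set \<Rightarrow> 'd list \<Rightarrow> bool" where
  "is_F_basis Fs W us \<longleftrightarrow>
     set us \<subseteq> W \<and>
     (\<forall>c. (\<forall>i<length us. c i \<in> Fs) \<and> (\<Sum>i<length us. c i * us ! i) = 0
          \<longrightarrow> (\<forall>i<length us. c i = 0)) \<and>
     (\<forall>x\<in>W. \<exists>c. (\<forall>i<length us. c i \<in> Fs) \<and> x = (\<Sum>i<length us. c i * us ! i))"

definition is_dual_basis :: "'d::division_ring set \<Rightarrow> 'd set \<Rightarrow> 'd list \<Rightarrow> (nat \<Rightarrow> 'd \<Rightarrow> 'd) \<Rightarrow> bool" where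
  "is_dual_basis Fs W us \<pi> \<longleftrightarrow>
     (\<forall>x\<in>W. (\<forall>i<length us. \<pi> i x \<in> Fs) \<and> x = (\<Sum>i<length us. \<pi> i x * us ! i))"

definition q_comp :: "(nat \<Rightarrow> 'd \<Rightarrow> 'd) \<Rightarrow> ('v \<Rightarrow> 'v \<Rightarrow> 'd) \<Rightarrow> nat \<Rightarrow> 'v \<Rightarrow> 'd" where
  "q_comp \<pi> h i v = \<pi> i (h v v)"

definition quad_regular :: "('v::ab_group_add \<Rightarrow> 'd::ab_group_add) \<Rightarrow> bool" where
  "quad_regular q \<longleftrightarrow> (\<forall>v. (\<forall>w. q (v + w) - q v - q w = 0) \<longrightarrow> v = 0)"

definition totally_regular :: "nat \<Rightarrow> (nat \<Rightarrow> 'v::ab_group_add \<Rightarrow> 'd::ab_group_add) \<Rightarrow> bool" where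
  "totally_regular n qs \<longleftrightarrow> (\<forall>i<n. quad_regular (qs i))"

end

theory Submission
  imports Defs
begin

lemma Symd_add:
  assumes inv: "involution_first_kind Fs \<theta>" and x: "x \<in> Symd lam \<theta>" and y: "y \<in> Symd lam \<theta>"
  shows "x + y \<in> Symd lam \<theta>"
proof -
  obtain a where a: "x = a + lam * \<theta> a" using x by (auto simp: Symd_def)
  obtain b where b: "y = b + lam * \<theta> b" using y by (auto simp: Symd_def)
  have "\<theta> (a + b) = \<theta> a + \<theta> b" using inv by (simp add: involution_first_kind_def)
  then have "x + y = (a + b) + lam * \<theta> (a + b)" using a b by (simp add: algebra_simps)
  then show ?thesis by (auto simp: Symd_def)
qed

lemma dual_add:
  assumes cs: "central_subfield Fs" and inv: "involution_first_kind Fs \<theta>"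
    and B: "is_F_basis Fs (Symd lam \<theta>) us" and P: "is_dual_basis Fs (Symd lam \<theta>) us \<pi>"
    and x: "x \<in> Symd lam \<theta>" and y: "y \<in> Symd lam \<theta>" and i: "i < length us"
  shows "\<pi> i (x + y) = \<pi> i x + \<pi> i y"
proof -
  have xy: "x + y \<in> Symd lam \<theta>" using Symd_add[OF inv x y] .
  define c where "c j = \<pi> j (x + y) - (\<pi> j x + \<pi> j y)" for j
  have Fsc: "\<forall>j<length us. c j \<in> Fs"
  proof (intro allI impI)
    fix j assume j: "j < length us"
    have "\<pi> j (x+y) \<in> Fs" "\<pi> j x \<in> Fs" "\<pi> j y \<in> Fs" using P x y xy j by (auto simp: is_dual_basis_def)
    then show "c j \<in> Fs" using cs unfolding c_def central_subfield_def
      by (metis diff_conv_add_uminus)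
  qed
  have ex: "x = (\<Sum>j<length us. \<pi> j x * us ! j)" and ey: "y = (\<Sum>j<length us. \<pi> j y * us ! j)"
    and exy: "x + y = (\<Sum>j<length us. \<pi> j (x+y) * us ! j)"
    using P x y xy by (auto simp: is_dual_basis_def)
  have "(\<Sum>j<length us. c j * us ! j) = (\<Sum>j<length us. \<pi> j (x+y) * us ! j) - ((\<Sum>j<length us. \<pi> j x * us ! j) + (\<Sum>j<length us. \<pi> j y * us ! j))"
    unfolding c_def by (simp add: algebra_simps sum_subtractf sum.distrib)
  also have "\<dots> = 0" using ex ey exy by simp
  finally have "(\<Sum>j<length us. c j * us ! j) = 0" .
  then have "c i = 0" using B Fsc i unfolding is_F_basis_def by blast
  then show ?thesis unfolding c_def by simp
qed

lemma dual_self: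
  assumes cs: "central_subfield Fs"
    and B: "is_F_basis Fs (Symd lam \<theta>) us" and P: "is_dual_basis Fs (Symd lam \<theta>) us \<pi>"
    and i: "i < length us"
  shows "\<pi> i (us ! i) = 1"
proof -
  have ui: "us ! i \<in> Symd lam \<theta>" using B i unfolding is_F_basis_def by auto
  define c where "c j = \<pi> j (us ! i) - (if j = i then 1 else 0)" for j
  have Fsc: "\<forall>j<length us. c j \<in> Fs"
  proof (intro allI impI)
    fix j assume j: "j < length us"
    have "\<pi> j (us ! i) \<in> Fs" using P ui j by (auto simp: is_dual_basis_def)
    moreover have "(if j = i then 1 else 0) \<in> Fs" using cs by (auto simp: central_subfield_def)
    ultimately show "c j \<in> Fs" using cs unfolding c_def central_subfield_def
      by (metis diff_conv_add_uminus)
  qed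
  have e: "us ! i = (\<Sum>j<length us. \<pi> j (us ! i) * us ! j)" using P ui by (auto simp: is_dual_basis_def)
  have e2: "(\<Sum>j<length us. (if j = i then 1 else 0) * us ! j) = us ! i"
  proof -
    have "(\<Sum>j<length us. (if j = i then 1 else 0) * us ! j) = (\<Sum>j<length us. if j = i then us ! j else 0)"
      by (rule sum.cong) auto
    also have "\<dots> = us ! i" using i by simp
    finally show ?thesis .
  qed
  have "(\<Sum>j<length us. c j * us ! j) = (\<Sum>j<length us. \<pi> j (us ! i) * us ! j) - (\<Sum>j<length us. (if j = i then 1 else 0) * us ! j)"
    unfolding c_def by (simp only: left_diff_distrib sum_subtractf)
  also have "\<dots> = 0" using e e2 by simp
  finally have "(\<Sum>j<length us. c j * us ! j) = 0" .
  then have "c i = 0" using B Fsc i unfolding is_F_basis_def by blast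
  then show ?thesis unfolding c_def by simp
qed

theorem proposition4p1:
  fixes Fs :: "'d::division_ring set"
    and \<theta> :: "'d \<Rightarrow> 'd"
    and lam :: 'd
    and smul :: "'v::ab_group_add \<Rightarrow> 'd \<Rightarrow> 'v"
    and h :: "'v \<Rightarrow> 'v \<Rightarrow> 'd"
  assumes "central_subfield Fs"
    and "findim_over Fs"
    and "involution_first_kind Fs \<theta>"
    and "lam = 1 \<or> lam = -1"
    and "right_vector_space smul"
    and "findim_right smul"
    and "lambda_hermitian \<theta> lam smul h"
    and "herm_even \<theta> lam h"
    and "Fs \<noteq> UNIV \<or> lam \<noteq> -1"
    and "herm_regular h"
  shows "\<forall>us \<pi>. is_F_basis Fs (Symd lam \<theta>) us \<and> is_dual_basis Fs (Symd lam \<theta>) us \<pi>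
           \<longrightarrow> totally_regular (length us) (q_comp \<pi> h)"
proof (intro allI impI)
  fix us \<pi> assume "is_F_basis Fs (Symd lam \<theta>) us \<and> is_dual_basis Fs (Symd lam \<theta>) us \<pi>"
  then have B: "is_F_basis Fs (Symd lam \<theta>) us" and P: "is_dual_basis Fs (Symd lam \<theta>) us \<pi>" by auto
  note cs = assms(1) and inv = assms(3)
  have th1: "\<theta> 1 = 1"
  proof -
    have m: "\<And>x y. \<theta> (x * y) = \<theta> y * \<theta> x" using inv by (simp add: involution_first_kind_def)
    have "\<theta> (\<theta> 1 * 1) = \<theta> 1 * \<theta> (\<theta> 1)" using m[of "\<theta> 1" 1] .
    then have "\<theta> (\<theta> 1) = \<theta> 1 * \<theta> (\<theta> 1)" by simp
    moreover have "\<theta> (\<theta> 1) = 1" using inv by (simp add: involution_first_kind_def)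
    ultimately show ?thesis by (metis mult_1_right)
  qed
  have hl: "\<And>u u' v. h (u + u') v = h u v + h u' v" and hr: "\<And>u v v'. h u (v + v') = h u v + h u v'"
    and hs: "\<And>u v a b. h (smul u a) (smul v b) = \<theta> a * h u v * b"
    and hsym: "\<And>u v. h v u = lam * \<theta> (h u v)"
    using assms(7) unfolding lambda_hermitian_def by blast+
  have s1: "\<And>v. smul v 1 = v" using assms(5) unfolding right_vector_space_def by auto
  have hscal: "\<And>v w b. h v (smul w b) = h v w * b"
  proof -
    fix v w b
    have "h v (smul w b) = h (smul v 1) (smul w b)" using s1 by simp
    also have "\<dots> = \<theta> 1 * h v w * b" by (rule hs)
    finally show "h v (smul w b) = h v w * b" using th1 by simp
  qed
  have ev: "\<And>v. h v v \<in> Symd lam \<theta>" using assms(8) unfolding herm_even_def by auto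
  show "totally_regular (length us) (q_comp \<pi> h)"
    unfolding totally_regular_def quad_regular_def
  proof (intro allI impI)
    fix i v assume i: "i < length us" and H: "\<forall>w. q_comp \<pi> h i (v + w) - q_comp \<pi> h i v - q_comp \<pi> h i w = 0"
    show "v = 0"
    proof (rule ccontr)
      assume "v \<noteq> 0"
      then obtain w0 where w0: "h v w0 \<noteq> 0" using assms(10) unfolding herm_regular_def by auto
      have "us ! i \<in> Symd lam \<theta>" using B i unfolding is_F_basis_def by auto
      then obtain a where a: "us ! i = a + lam * \<theta> a" by (auto simp: Symd_def)
      define w where "w = smul w0 (inverse (h v w0) * a)"
      have hvw: "h v w = a" unfolding w_def hscal using w0 by (metis mult.assoc right_inverse mult_1_left)
      have hwv: "h w v = lam * \<theta> a" proof -
        have "h w v = lam * \<theta> (h v w)" by (rule hsym)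
        then show ?thesis unfolding hvw .
      qed
      have S: "h v w + h w v \<in> Symd lam \<theta>" unfolding hwv hvw Symd_def by auto
      have exp: "h (v + w) (v + w) = (h v v + h w w) + (h v w + h w v)"
        by (simp add: hl hr algebra_simps)
      have "\<pi> i (h (v + w) (v + w)) = \<pi> i (h v v) + \<pi> i (h w w) + \<pi> i (h v w + h w v)"
      proof -
        have A: "h v v + h w w \<in> Symd lam \<theta>" using Symd_add[OF inv ev ev] .
        show ?thesis unfolding exp dual_add[OF cs inv B P A S i] dual_add[OF cs inv B P ev ev i] ..
      qed
      then have "q_comp \<pi> h i (v + w) - q_comp \<pi> h i v - q_comp \<pi> h i w = \<pi> i (us ! i)"
        unfolding q_comp_def using a hvw hwv by (simp add: algebra_simps)
      also have "\<dots> = 1" using dual_self[OF cs B P i] .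
      finally show False using H by simp
    qed
  qed
qed

end
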